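(* Let $d\in\mathbb{N}$ and $(d_1,d_2)\in\mathbb{N}^2$. Then $$E_d=\{m+n\gamma^{-1}\ge0:\ m,n\in\mathbb{Z},\ |m|+|n|\le d\},\qquad E_{(d_1,d_2)}=\{m+n\gamma^{-1}\ge0:\ m,n\in\mathbb{Z},\ |m|\le d_1,\ |n|\le d_2\},$$ and $|E_d|=d^2+d+1$, $|E_{(d_1,d_2)}|=2d_1d_2+d_1+d_2+1$.
   Context: Let $f\colon\mathbb{Z}\to\mathbb{Z}$ be defined by $f(0)=f(1)=1$, $f(i+2)=f(i+1)+f(i)$ for all $i\in\mathbb{Z}$; $\gamma=(1+\sqrt5)/2$; $\mathbb{Z}[\gamma]=\mathbb{Z}\oplus\mathbb{Z}\gamma^{-1}$. For $d\in\mathbb{N}$, $E_d$ is the set of $\alpha\in\mathbb{Z}[\gamma]$ such that $\alpha=\sum_{k=1}^s\gamma^{-i_k}$ and $\sum_{k=1}^sf(i_k)\le d$ for some $s\in\mathbb{N}$ and integers $0\le i_1\le\dots\le i_s$ (empty sum $=0$). For $(d_1,d_2)\in\mathbb{N}^2$, $E_{(d_1,d_2)}$ is the set of $\alpha\in\mathbb{Z}[\gamma]$ such that $\alpha=\sum_{k=1}^s\gamma^{-i_k}$, $\sum_kf(i_k-2)\le d_1$ and $\sum_kf(i_k-1)\le d_2$ for some such $s$ and $i_1,\dots,i_s$. *)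

theory Defs
  imports Complex_Main
begin

function fibZ :: "int \<Rightarrow> int" where
  "fibZ i = (if i = 0 \<or> i = 1 then 1
             else if i > 1 then fibZ (i - 1) + fibZ (i - 2)
             else fibZ (i + 2) - fibZ (i + 1))"
  by auto
termination
  by (relation "measure (\<lambda>i. nat (if i \<ge> 1 then i else 1 - i))") auto

definition gam :: real where
  "gam = (1 + sqrt 5) / 2"

definition E1 :: "nat \<Rightarrow> real set" where
  "E1 d = {\<alpha>. \<exists>is :: nat list. sorted is \<and>
              \<alpha> = (\<Sum>i\<leftarrow>is. (1 / gam) ^ i) \<and>
              (\<Sum>i\<leftarrow>is. fibZ (int i)) \<le> int d}"

definition E2 :: "nat \<Rightarrow> nat \<Rightarrow> real set" where
  "E2 d1 d2 = {\<alpha>. \<exists>is :: nat list. sorted is \<and>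
              \<alpha> = (\<Sum>i\<leftarrow>is. (1 / gam) ^ i) \<and>
              (\<Sum>i\<leftarrow>is. fibZ (int i - 2)) \<le> int d1 \<and>
              (\<Sum>i\<leftarrow>is. fibZ (int i - 1)) \<le> int d2}"

end

theory Submission
  imports Defs "HOL-Library.Multiset"
begin
declare fibZ.simps[simp del]

lemma fib_rec: "fibZ i = fibZ (i - 1) + fibZ (i - 2)"
proof (cases "i \<ge> 2")
  case True then show ?thesis by (subst fibZ.simps) simp
next
  case False
  then have "fibZ (i-2) = fibZ i - fibZ (i - 1)" by (subst fibZ.simps) simp
  then show ?thesis by simp
qed
lemma fib0: "fibZ 0 = 1" by (subst fibZ.simps) simp
lemma fib1: "fibZ 1 = 1" by (subst fibZ.simps) simp
lemma fibm1: "fibZ (-1) = 0" by (subst fibZ.simps) (simp add: fib0 fib1)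
lemma fibm2: "fibZ (-2) = 1" by (subst fibZ.simps) (simp add: fib0 fibm1)

lemma fib_nonneg_aux: "fibZ (int k - 2) \<ge> 0 \<and> fibZ (int k - 1) \<ge> 0"
proof (induction k)
  case 0 then show ?case by (simp add: fibm1 fibm2)
next
  case (Suc k)
  have "fibZ (int k) = fibZ (int k - 1) + fibZ (int k - 2)" by (rule fib_rec)
  then show ?case using Suc by simp
qed
lemma fib_nonneg: "fibZ (int k - 2) \<ge> 0" "fibZ (int k - 1) \<ge> 0" "fibZ (int k) \<ge> 0"
  using fib_nonneg_aux[of k] fib_nonneg_aux[of "k+1"] by auto

definition phi :: real where "phi = 1 / gam"

lemma sqrt5: "sqrt 5 * sqrt 5 = (5::real)" by simp
lemma phi_alt: "phi = (sqrt 5 - 1) / 2"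
proof -
  have "(1 + sqrt 5) * (sqrt 5 - 1) = (4::real)" using sqrt5 by (simp add: algebra_simps)
  moreover have "1 + sqrt 5 > (0::real)" by (simp add: add_pos_nonneg)
  ultimately show ?thesis unfolding phi_def gam_def by (simp add: field_simps)
qed
lemma phi_sq: "phi^2 = 1 - phi"
  unfolding phi_alt power2_eq_square using sqrt5 by (simp add: field_simps)
lemma phi_gt: "phi > 1/2" "phi < 1"
proof -
  have "sqrt 5 > (2::real)" by (rule real_less_rsqrt) simp
  moreover have "sqrt 5 < (3::real)" by (rule real_less_lsqrt) simp_all
  ultimately show "phi > 1/2" "phi < 1" unfolding phi_alt by auto
qed
lemma phi_pos: "phi > 0" using phi_gt by simp

lemma sq5: "(x::int)^2 = 5 * y^2 \<Longrightarrow> 5 dvd x"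
proof -
  assume h: "x^2 = 5*y^2"
  have "x mod 5 \<in> {0,1,2,3,4}" by auto
  moreover have "x^2 mod 5 = (x mod 5)^2 mod 5" by (simp add: power_mod)
  moreover have "x^2 mod 5 = 0" using h by simp
  ultimately have "x mod 5 = 0" by auto
  then show ?thesis by auto
qed

lemma descent: "(x::int)^2 = 5 * y^2 \<Longrightarrow> y = 0"
proof (induction "nat \<bar>y\<bar>" arbitrary: x y rule: less_induct)
  case less
  show ?case
  proof (rule ccontr)
    assume y0: "y \<noteq> 0"
    obtain k where k: "x = 5*k" using sq5[OF less.prems] by auto
    have "y^2 = 5*k^2" using less.prems k by (simp add: power_mult_distrib)
    then obtain j where j: "y = 5*j" using sq5 by blast
    have "k^2 = 5*j^2" using \<open>y^2 = 5*k^2\<close> j by (simp add: power_mult_distrib)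
    moreover have "nat \<bar>j\<bar> < nat \<bar>y\<bar>" using j y0 by auto
    ultimately have "j = 0" using less.hyps by blast
    then show False using j y0 by simp
  qed
qed

lemma irr: "of_int a + of_int b * phi = 0 \<Longrightarrow> a = 0 \<and> b = 0"
proof -
  assume h: "of_int a + of_int b * phi = 0"
  have "of_int b * sqrt 5 = of_int (b - 2*a)" using h unfolding phi_alt by (simp add: field_simps)
  then have "(of_int b * sqrt 5)^2 = (of_int (b - 2*a) :: real)^2" by simp
  then have "real_of_int (5 * b^2) = of_int ((b-2*a)^2)" by (simp add: power_mult_distrib)
  then have "(b-2*a)^2 = 5 * b^2" by linarith
  then have "b = 0" by (rule descent)
  then show ?thesis using h by simp
qed

lemma step_alg:
  fixes s F0 F1 F2 F3 :: int
  assumes "F2 = F1 + F0" "F3 = F2 + F1"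
  shows "(of_int (s*F0) + of_int (-s*F1) * phi) - (of_int (-s*F1) + of_int (s*F2) * phi) = of_int (s*F2) + of_int (-s*F3) * (phi::real)"
  unfolding assms by (simp add: algebra_simps)

lemma phi_pow: "phi^i = of_int ((-1)^i * fibZ (int i - 2)) + of_int ((-1)^(i+1) * fibZ (int i - 1)) * phi"
proof -
  have "\<forall>i. i \<le> k \<longrightarrow> phi^i = of_int ((-1)^i * fibZ (int i - 2)) + of_int ((-1)^(i+1) * fibZ (int i - 1)) * phi" for k
  proof (induction k)
    case 0 then show ?case by (simp add: fibm1 fibm2)
  next
    case (Suc k)
    show ?case
    proof (intro allI impI)
      fix i assume "i \<le> Suc k"
      show "phi^i = of_int ((-1)^i * fibZ (int i - 2)) + of_int ((-1)^(i+1) * fibZ (int i - 1)) * phi"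
      proof (cases "i \<le> k")
        case True then show ?thesis using Suc by blast
      next
        case False
        then have ii: "i = Suc k" using \<open>i \<le> Suc k\<close> by simp
        show ?thesis
        proof (cases k)
          case 0 then show ?thesis using ii by (simp add: fibm1 fib0)
        next
          case (Suc j)
          have k: "k = Suc j" by fact
          have h1: "phi^j = of_int ((-1)^j * fibZ (int j - 2)) + of_int ((-1)^(j+1) * fibZ (int j - 1)) * phi"
          proof -
            have "j \<le> k" using k by simp
            then show ?thesis using Suc.IH by blast
          qed
          have h2: "phi^(Suc j) = of_int ((-1)^(Suc j) * fibZ (int (Suc j) - 2)) + of_int ((-1)^(Suc j+1) * fibZ (int (Suc j) - 1)) * phi"
          proof -
            have "Suc j \<le> k" using k by simp
            then show ?thesis using Suc.IH by blast
          qed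
          have pp: "phi^(Suc (Suc j)) = phi^j - phi^(Suc j)"
          proof -
            have "phi^(Suc (Suc j)) = phi^j * phi^2" by (simp add: power2_eq_square mult_ac)
            also have "\<dots> = phi^j - phi^(Suc j)" unfolding phi_sq by (simp add: algebra_simps)
            finally show ?thesis .
          qed
          have f1: "fibZ (int j) = fibZ (int j - 1) + fibZ (int j - 2)" by (rule fib_rec)
          have f2: "fibZ (1 + int j) = fibZ (int j) + fibZ (int j - 1)" using fib_rec[of "1 + int j"] by simp
          have "phi^(Suc (Suc j)) = phi^j - phi^(Suc j)" by (rule pp)
          also have "\<dots> = (of_int ((-1)^j * fibZ (int j - 2)) + of_int ((-1)^(j+1) * fibZ (int j - 1)) * phi)
              - (of_int ((-1)^(Suc j) * fibZ (int (Suc j) - 2)) + of_int ((-1)^(Suc j+1) * fibZ (int (Suc j) - 1)) * phi)"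
            by (subst h1, subst h2, rule refl)
          also have "\<dots> = of_int ((-1)^(Suc (Suc j)) * fibZ (int (Suc (Suc j)) - 2)) + of_int ((-1)^(Suc (Suc j)+1) * fibZ (int (Suc (Suc j)) - 1)) * phi"
          proof -
            have e: "(-1::int)^(j+1) = -((-1)^j)" "(-1::int)^(Suc j) = -((-1)^j)" "(-1::int)^(Suc j+1) = (-1)^j"
              "(-1::int)^(Suc (Suc j)) = (-1)^j" "(-1::int)^(Suc (Suc j)+1) = -((-1)^j)" by simp_all
            have i: "int (Suc j) - 2 = int j - 1" "int (Suc j) - 1 = int j" "int (Suc (Suc j)) - 2 = int j"
              "int (Suc (Suc j)) - 1 = 1 + int j" by simp_all
            show ?thesis unfolding e i by (rule step_alg[OF f1 f2])
          qed
          finally show ?thesis unfolding ii k .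
        qed
      qed
    qed
  qed
  then show ?thesis by blast
qed

lemma fwd: "\<exists>M N. (\<Sum>i\<leftarrow>is. phi^i) = of_int M + of_int N * phi \<and> \<bar>M\<bar> \<le> (\<Sum>i\<leftarrow>is. fibZ (int i - 2)) \<and> \<bar>N\<bar> \<le> (\<Sum>i\<leftarrow>is. fibZ (int i - 1))"
proof (induction "is")
  case Nil then show ?case by (intro exI[of _ 0]) simp
next
  case (Cons a "is")
  then obtain M N where MN: "(\<Sum>i\<leftarrow>is. phi^i) = of_int M + of_int N * phi" "\<bar>M\<bar> \<le> (\<Sum>i\<leftarrow>is. fibZ (int i - 2))" "\<bar>N\<bar> \<le> (\<Sum>i\<leftarrow>is. fibZ (int i - 1))" by blast
  define A where "A = (-1::int)^a * fibZ (int a - 2)"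
  define B where "B = (-1::int)^(a+1) * fibZ (int a - 1)"
  have "\<bar>A\<bar> = fibZ (int a - 2)" unfolding A_def using fib_nonneg(1)[of a] by (simp add: abs_mult)
  moreover have "\<bar>B\<bar> = fibZ (int a - 1)" unfolding B_def using fib_nonneg(2)[of a] by (simp add: abs_mult)
  moreover have "phi^a = of_int A + of_int B * phi" unfolding A_def B_def by (rule phi_pow)
  ultimately show ?case using MN
    by (intro exI[of _ "A + M"] exI[of _ "B + N"]) (auto simp: algebra_simps intro: order.trans[OF abs_triangle_ineq])
qed

lemma sum_nonneg_phi: "(\<Sum>i\<leftarrow>is. phi^i) \<ge> 0"
proof (induction "is")
  case (Cons a "is")
  have "phi^a \<ge> 0" using phi_pos by simp
  then show ?case using Cons by simp
qed simp

lemma fib_split: "(\<Sum>i\<leftarrow>is. fibZ (int i)) = (\<Sum>i\<leftarrow>is. fibZ (int i - 2)) + (\<Sum>i\<leftarrow>is. fibZ (int i - 1))"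
proof (induction "is")
  case (Cons a "is")
  have "fibZ (int a) = fibZ (int a - 1) + fibZ (int a - 2)" by (rule fib_rec)
  then show ?case using Cons by simp
qed simp

lemma shift2:
  "(\<Sum>i\<leftarrow>map (\<lambda>i. i+2) is. phi^i) = phi^2 * (\<Sum>i\<leftarrow>is. phi^i)"
  "(\<Sum>i\<leftarrow>map (\<lambda>i. i+2) is. fibZ (int i - 2)) = (\<Sum>i\<leftarrow>is. fibZ (int i - 2)) + (\<Sum>i\<leftarrow>is. fibZ (int i - 1))"
  "(\<Sum>i\<leftarrow>map (\<lambda>i. i+2) is. fibZ (int i - 1)) = (\<Sum>i\<leftarrow>is. fibZ (int i - 2)) + 2 * (\<Sum>i\<leftarrow>is. fibZ (int i - 1))"
proof (induction "is")
  case (Cons a "is")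
  { case 1 show ?case using Cons by (simp add: power_add algebra_simps power2_eq_square) }
  { case 2
    have "fibZ (int a) = fibZ (int a - 1) + fibZ (int a - 2)" by (rule fib_rec)
    then show ?case using Cons by simp }
  { case 3
    have "fibZ (int a) = fibZ (int a - 1) + fibZ (int a - 2)" by (rule fib_rec)
    moreover have "fibZ (1 + int a) = fibZ (int a) + fibZ (int a - 1)" using fib_rec[of "1 + int a"] by simp
    ultimately show ?case using Cons by simp }
qed simp_all

lemma shift1:
  "(\<Sum>i\<leftarrow>map (\<lambda>i. i+1) is. phi^i) = phi * (\<Sum>i\<leftarrow>is. phi^i)"
  "(\<Sum>i\<leftarrow>map (\<lambda>i. i+1) is. fibZ (int i - 2)) = (\<Sum>i\<leftarrow>is. fibZ (int i - 1))"
  "(\<Sum>i\<leftarrow>map (\<lambda>i. i+1) is. fibZ (int i - 1)) = (\<Sum>i\<leftarrow>is. fibZ (int i - 2)) + (\<Sum>i\<leftarrow>is. fibZ (int i - 1))"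
proof (induction "is")
  case (Cons a "is")
  { case 1 show ?case using Cons by (simp add: algebra_simps) }
  { case 2 then show ?case using Cons by simp }
  { case 3
    have "fibZ (int a) = fibZ (int a - 1) + fibZ (int a - 2)" by (rule fib_rec)
    then show ?case using Cons by simp }
qed simp_all


lemma rep:
  fixes m n :: int
  assumes "0 \<le> of_int m + of_int n * phi"
  shows "\<exists>is. (\<Sum>i\<leftarrow>is. phi^i) = of_int m + of_int n * phi \<and> (\<Sum>i\<leftarrow>is. fibZ (int i - 2)) \<le> \<bar>m\<bar> \<and> (\<Sum>i\<leftarrow>is. fibZ (int i - 1)) \<le> \<bar>n\<bar>"
  using assms
proof (induction "nat (\<bar>m\<bar> + \<bar>n\<bar>)" arbitrary: m n rule: less_induct)
  case less
  note ge = less.prems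
  consider "m \<ge> 0" "n \<ge> 0" | "m > 0" "n < 0" "-n \<le> m" | "m > 0" "n < 0" "-n > m" | "m < 0" "n > 0"
    | "m < 0" "n \<le> 0" | "m = 0" "n < 0" by linarith
  then show ?case
  proof cases
    case 1
    let ?is = "replicate (nat m) (0::nat) @ replicate (nat n) 1"
    show ?thesis using 1 by (intro exI[of _ ?is]) (simp add: fibm1 fibm2 fib0 sum_list_replicate)
  next
    case 2
    let ?is = "replicate (nat (-n)) (2::nat) @ replicate (nat (m+n)) 0"
    have "(\<Sum>i\<leftarrow>?is. phi^i) = of_int (-n) * phi^2 + of_int (m+n)" using 2 by (simp add: sum_list_replicate)
    also have "\<dots> = of_int m + of_int n * phi" unfolding phi_sq by (simp add: algebra_simps)
    finally show ?thesis using 2 by (intro exI[of _ ?is]) (simp add: fibm1 fibm2 fib0 fib1 sum_list_replicate)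
  next
    case 3
    have "2*m + n > 0"
    proof (rule ccontr)
      assume "\<not> 2*m+n > 0"
      then have "of_int n \<le> -2 * (of_int m :: real)" by linarith
      then have "of_int n * phi \<le> (-2 * of_int m) * phi" using phi_pos by (intro mult_right_mono) auto
      moreover have "of_int m * (1 - 2*phi) < 0" using 3 phi_gt by (simp add: mult_pos_neg)
      ultimately show False using ge by (simp add: algebra_simps)
    qed
    define m' where "m' = 2*m+n"
    define n' where "n' = m+n"
    have p3: "phi * phi^2 = 2*phi - 1"
    proof -
      have "phi * phi^2 = phi * (1 - phi)" by (simp only: phi_sq)
      also have "\<dots> = phi - phi^2" by (simp add: algebra_simps power2_eq_square)
      also have "\<dots> = 2*phi - 1" by (simp add: phi_sq)
      finally show ?thesis .
    qed
    have eq: "(of_int m' + of_int n' * phi) * phi^2 = of_int m + of_int n * phi"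
    proof -
      have "(of_int m' + of_int n' * phi) * phi^2 = of_int m' * phi^2 + of_int n' * (phi * phi^2)" by algebra
      also have "\<dots> = of_int m' * (1 - phi) + of_int n' * (2*phi - 1)" by (subst p3) (simp only: phi_sq)
      also have "\<dots> = of_int m + of_int n * phi" unfolding m'_def n'_def by (simp add: algebra_simps)
      finally show ?thesis .
    qed
    have ge': "0 \<le> of_int m' + of_int n' * phi"
    proof -
      have pos: "phi^2 > 0" using phi_pos by simp
      have "0 \<le> (of_int m' + of_int n' * phi) * phi^2" using ge eq by linarith
      then show ?thesis using pos by (metis not_le mult_neg_pos)
    qed
    have lt: "nat (\<bar>m'\<bar> + \<bar>n'\<bar>) < nat (\<bar>m\<bar> + \<bar>n\<bar>)" using 3 \<open>2*m+n>0\<close> unfolding m'_def n'_def by simp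
    obtain is' where is': "(\<Sum>i\<leftarrow>is'. phi^i) = of_int m' + of_int n' * phi"
      "(\<Sum>i\<leftarrow>is'. fibZ (int i - 2)) \<le> \<bar>m'\<bar>" "(\<Sum>i\<leftarrow>is'. fibZ (int i - 1)) \<le> \<bar>n'\<bar>"
      using less.hyps[OF lt ge'] by blast
    show ?thesis
      apply (intro exI[of _ "map (\<lambda>i. i+2) is'"])
      unfolding shift2 using is' eq 3 \<open>2*m+n>0\<close> unfolding m'_def n'_def by (simp add: algebra_simps)
  next
    case 4
    have "m + n > 0"
    proof (rule ccontr)
      assume "\<not> m+n > 0"
      then have "of_int m \<le> - (of_int n :: real)" by linarith
      moreover have "of_int n * (phi - 1) < 0" using 4 phi_gt by (simp add: mult_pos_neg)
      ultimately show False using ge by (simp add: algebra_simps)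
    qed
    define m' where "m' = m+n"
    define n' where "n' = m"
    have eq: "(of_int m' + of_int n' * phi) * phi = of_int m + of_int n * phi"
    proof -
      have "(of_int m' + of_int n' * phi) * phi = of_int m' * phi + of_int n' * phi^2" by (simp add: algebra_simps power2_eq_square)
      also have "\<dots> = of_int m + of_int n * phi" unfolding phi_sq m'_def n'_def by (simp add: algebra_simps)
      finally show ?thesis .
    qed
    have ge': "0 \<le> of_int m' + of_int n' * phi"
    proof -
      have "0 \<le> (of_int m' + of_int n' * phi) * phi" using ge eq by linarith
      then show ?thesis using phi_pos by (metis not_le mult_neg_pos)
    qed
    have lt: "nat (\<bar>m'\<bar> + \<bar>n'\<bar>) < nat (\<bar>m\<bar> + \<bar>n\<bar>)" using 4 \<open>m+n>0\<close> unfolding m'_def n'_def by simp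
    obtain is' where is': "(\<Sum>i\<leftarrow>is'. phi^i) = of_int m' + of_int n' * phi"
      "(\<Sum>i\<leftarrow>is'. fibZ (int i - 2)) \<le> \<bar>m'\<bar>" "(\<Sum>i\<leftarrow>is'. fibZ (int i - 1)) \<le> \<bar>n'\<bar>"
      using less.hyps[OF lt ge'] by blast
    show ?thesis
      apply (intro exI[of _ "map (\<lambda>i. i+1) is'"])
      unfolding shift1 using is' eq 4 \<open>m+n>0\<close> unfolding m'_def n'_def by (simp add: algebra_simps)
  next
    case 5
    have "of_int n * phi \<le> 0" using 5 phi_pos by (simp add: mult_nonpos_nonneg)
    then show ?thesis using ge 5 by linarith
  next
    case 6
    have "of_int n * phi < 0" using 6 phi_pos by (simp add: mult_neg_pos)
    then show ?thesis using ge 6 by linarith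
  qed
qed


definition gg :: "int \<times> int \<Rightarrow> real" where "gg p = of_int (fst p) + of_int (snd p) * phi"

lemma gg_inj: "inj gg"
proof (rule injI)
  fix p q assume "gg p = gg q"
  then have "of_int (fst p - fst q) + of_int (snd p - snd q) * phi = 0"
    unfolding gg_def by (simp add: algebra_simps)
  then have "fst p - fst q = 0 \<and> snd p - snd q = 0" by (rule irr)
  then show "p = q" by (simp add: prod_eq_iff)
qed

lemma half_count:
  fixes B :: "(int \<times> int) set"
  assumes fin: "finite B" and z: "(0,0) \<in> B" and sym: "\<And>m n. (m,n) \<in> B \<Longrightarrow> (-m,-n) \<in> B"
  shows "2 * card {p\<in>B. gg p \<ge> 0} = card B + 1"
proof -
  define P where "P = {p\<in>B. gg p \<ge> 0}"
  define Q where "Q = {p\<in>B. gg p \<le> 0}"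
  define ng where "ng = (\<lambda>p::int\<times>int. (- fst p, - snd p))"
  have gng: "gg (ng p) = - gg p" for p unfolding gg_def ng_def by simp
  have "ng ` P = Q"
  proof
    show "ng ` P \<subseteq> Q" unfolding P_def Q_def using sym gng by (auto simp: ng_def)
    show "Q \<subseteq> ng ` P"
    proof
      fix q assume q: "q \<in> Q"
      have "ng (ng q) = q" unfolding ng_def by simp
      moreover have "ng q \<in> P" using q sym gng unfolding P_def Q_def by (cases q) (auto simp: ng_def)
      ultimately show "q \<in> ng ` P" by (metis image_eqI)
    qed
  qed
  moreover have "inj ng" unfolding ng_def by (rule injI) (simp add: prod_eq_iff)
  ultimately have cQ: "card Q = card P" by (metis card_image inj_on_subset subset_UNIV)
  have U: "P \<union> Q = B" unfolding P_def Q_def by auto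
  have I: "P \<inter> Q = {(0,0)}"
  proof
    show "P \<inter> Q \<subseteq> {(0,0)}"
    proof
      fix p assume "p \<in> P \<inter> Q"
      then have "gg p = gg (0,0)" unfolding P_def Q_def gg_def by auto
      then show "p \<in> {(0,0)}" using gg_inj by (auto dest: injD)
    qed
    show "{(0,0)} \<subseteq> P \<inter> Q" using z unfolding P_def Q_def gg_def by auto
  qed
  have "card P + card Q = card (P \<union> Q) + card (P \<inter> Q)"
    by (rule card_Un_Int) (use fin in \<open>auto simp: P_def Q_def\<close>)
  then show ?thesis using U I cQ unfolding P_def by simp
qed

lemma diamond_sum: "(\<Sum>m\<in>{-int d..int d}. 2*(int d - \<bar>m\<bar>) + 1) = 2 * int d^2 + 2 * int d + 1"
proof (induction d)
  case 0 then show ?case by simp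
next
  case (Suc d)
  have S: "{-int (Suc d)..int (Suc d)} = insert (-int d - 1) (insert (int d + 1) {-int d..int d})" by auto
  have "(\<Sum>m\<in>{-int d..int d}. 2*(int (Suc d) - \<bar>m\<bar>) + 1) = (\<Sum>m\<in>{-int d..int d}. (2*(int d - \<bar>m\<bar>) + 1) + 2)"
    by simp
  also have "\<dots> = 2 * int d^2 + 2 * int d + 1 + 2 * (2 * int d + 1)"
    by (simp only: sum.distrib[of "\<lambda>m. 2*(int d - \<bar>m\<bar>) + 1" "\<lambda>m. 2"] Suc.IH) simp
  finally have h: "(\<Sum>m\<in>{-int d..int d}. 2*(int (Suc d) - \<bar>m\<bar>) + 1) = 2 * int d^2 + 2 * int d + 1 + 2 * (2 * int d + 1)" .
  show ?case unfolding S using h by (simp add: power2_eq_square algebra_simps)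
qed

lemma diamond_card: "card {p::int\<times>int. \<bar>fst p\<bar> + \<bar>snd p\<bar> \<le> int d} = 2*d^2 + 2*d + 1"
proof -
  have D: "{p::int\<times>int. \<bar>fst p\<bar> + \<bar>snd p\<bar> \<le> int d} = Sigma {-int d..int d} (\<lambda>m. {-(int d - \<bar>m\<bar>)..int d - \<bar>m\<bar>})"
    by auto
  have "int (card (Sigma {-int d..int d} (\<lambda>m. {-(int d - \<bar>m\<bar>)..int d - \<bar>m\<bar>})))
      = (\<Sum>m\<in>{-int d..int d}. int (card {-(int d - \<bar>m\<bar>)..int d - \<bar>m\<bar>}))"
    by (simp add: of_nat_sum)
  also have "\<dots> = (\<Sum>m\<in>{-int d..int d}. 2*(int d - \<bar>m\<bar>) + 1)"
    by (rule sum.cong) auto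
  finally have "int (card {p::int\<times>int. \<bar>fst p\<bar> + \<bar>snd p\<bar> \<le> int d}) = int (2*d^2 + 2*d + 1)"
    unfolding D diamond_sum by simp
  then show ?thesis by linarith
qed

lemma box_card: "card ({-int a..int a} \<times> {-int b..int b}) = (2*a+1)*(2*b+1)"
proof -
  have "nat (2 * int a + 1) = 2*a+1" "nat (2 * int b + 1) = 2*b+1" by arith+
  then show ?thesis by (simp add: card_cartesian_product)
qed


lemma sum_sort: "sum_list (map (f :: nat \<Rightarrow> 'b::comm_monoid_add) (sort xs)) = sum_list (map f xs)"
proof -
  have "mset (map f (sort xs)) = mset (map f xs)" by simp
  then have "sum_mset (mset (map f (sort xs))) = sum_mset (mset (map f xs))" by (rule arg_cong)
  then show ?thesis by (simp only: sum_mset_sum_list)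
qed

lemma div_gam: "of_int n / gam = of_int n * phi" unfolding phi_def by simp

lemma E2_eq: "E2 d1 d2 = {x. \<exists>m n :: int. x = of_int m + of_int n / gam \<and> x \<ge> 0 \<and> \<bar>m\<bar> \<le> int d1 \<and> \<bar>n\<bar> \<le> int d2}"
proof (intro equalityI subsetI)
  fix x assume "x \<in> E2 d1 d2"
  then obtain "is" where h: "x = (\<Sum>i\<leftarrow>is. phi ^ i)" "(\<Sum>i\<leftarrow>is. fibZ (int i - 2)) \<le> int d1"
    "(\<Sum>i\<leftarrow>is. fibZ (int i - 1)) \<le> int d2"
    unfolding E2_def phi_def[symmetric] by blast
  obtain M N where MN: "(\<Sum>i\<leftarrow>is. phi^i) = of_int M + of_int N * phi" "\<bar>M\<bar> \<le> (\<Sum>i\<leftarrow>is. fibZ (int i - 2))" "\<bar>N\<bar> \<le> (\<Sum>i\<leftarrow>is. fibZ (int i - 1))"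
    using fwd by blast
  have x1: "x = of_int M + of_int N / gam" using h(1) MN(1) unfolding div_gam by simp
  have x2: "x \<ge> 0" using h(1) sum_nonneg_phi[of "is"] by simp
  have x3: "\<bar>M\<bar> \<le> int d1" using MN(2) h(2) by linarith
  have x4: "\<bar>N\<bar> \<le> int d2" using MN(3) h(3) by linarith
  show "x \<in> {x. \<exists>m n :: int. x = of_int m + of_int n / gam \<and> x \<ge> 0 \<and> \<bar>m\<bar> \<le> int d1 \<and> \<bar>n\<bar> \<le> int d2}"
    using x1 x2 x3 x4 by blast
next
  fix x assume "x \<in> {x. \<exists>m n :: int. x = of_int m + of_int n / gam \<and> x \<ge> 0 \<and> \<bar>m\<bar> \<le> int d1 \<and> \<bar>n\<bar> \<le> int d2}"
  then obtain m n :: int where h: "x = of_int m + of_int n * phi" "x \<ge> 0" "\<bar>m\<bar> \<le> int d1" "\<bar>n\<bar> \<le> int d2"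
    unfolding div_gam by blast
  obtain "is" where r: "(\<Sum>i\<leftarrow>is. phi^i) = of_int m + of_int n * phi" "(\<Sum>i\<leftarrow>is. fibZ (int i - 2)) \<le> \<bar>m\<bar>" "(\<Sum>i\<leftarrow>is. fibZ (int i - 1)) \<le> \<bar>n\<bar>"
    using rep h(1,2) by blast
  have y0: "sorted (sort is)" by simp
  have y1: "x = (\<Sum>i\<leftarrow>sort is. (1/gam)^i)" unfolding phi_def[symmetric] sum_sort using h(1) r(1) by simp
  have y2: "(\<Sum>i\<leftarrow>sort is. fibZ (int i - 2)) \<le> int d1" unfolding sum_sort using r(2) h(3) by linarith
  have y3: "(\<Sum>i\<leftarrow>sort is. fibZ (int i - 1)) \<le> int d2" unfolding sum_sort using r(3) h(4) by linarith
  show "x \<in> E2 d1 d2" unfolding E2_def using y0 y1 y2 y3 by blast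
qed

lemma E1_eq: "E1 d = {x. \<exists>m n :: int. x = of_int m + of_int n / gam \<and> x \<ge> 0 \<and> \<bar>m\<bar> + \<bar>n\<bar> \<le> int d}"
proof (intro equalityI subsetI)
  fix x assume "x \<in> E1 d"
  then obtain "is" where h: "x = (\<Sum>i\<leftarrow>is. phi ^ i)" "(\<Sum>i\<leftarrow>is. fibZ (int i)) \<le> int d"
    unfolding E1_def phi_def[symmetric] by blast
  obtain M N where MN: "(\<Sum>i\<leftarrow>is. phi^i) = of_int M + of_int N * phi" "\<bar>M\<bar> \<le> (\<Sum>i\<leftarrow>is. fibZ (int i - 2))" "\<bar>N\<bar> \<le> (\<Sum>i\<leftarrow>is. fibZ (int i - 1))"
    using fwd by blast
  have x1: "x = of_int M + of_int N / gam" using h(1) MN(1) unfolding div_gam by simp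
  have x2: "x \<ge> 0" using h(1) sum_nonneg_phi[of "is"] by simp
  have x3: "\<bar>M\<bar> + \<bar>N\<bar> \<le> int d" using MN(2,3) h(2) fib_split[of "is"] by linarith
  show "x \<in> {x. \<exists>m n :: int. x = of_int m + of_int n / gam \<and> x \<ge> 0 \<and> \<bar>m\<bar> + \<bar>n\<bar> \<le> int d}"
    using x1 x2 x3 by blast
next
  fix x assume "x \<in> {x. \<exists>m n :: int. x = of_int m + of_int n / gam \<and> x \<ge> 0 \<and> \<bar>m\<bar> + \<bar>n\<bar> \<le> int d}"
  then obtain m n :: int where h: "x = of_int m + of_int n * phi" "x \<ge> 0" "\<bar>m\<bar> + \<bar>n\<bar> \<le> int d"
    unfolding div_gam by blast
  obtain "is" where r: "(\<Sum>i\<leftarrow>is. phi^i) = of_int m + of_int n * phi" "(\<Sum>i\<leftarrow>is. fibZ (int i - 2)) \<le> \<bar>m\<bar>" "(\<Sum>i\<leftarrow>is. fibZ (int i - 1)) \<le> \<bar>n\<bar>"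
    using rep h(1,2) by blast
  have y0: "sorted (sort is)" by simp
  have y1: "x = (\<Sum>i\<leftarrow>sort is. (1/gam)^i)" unfolding phi_def[symmetric] sum_sort using h(1) r(1) by simp
  have y2: "(\<Sum>i\<leftarrow>sort is. fibZ (int i)) \<le> int d" unfolding sum_sort using r(2,3) h(3) fib_split[of "is"] by linarith
  show "x \<in> E1 d" unfolding E1_def using y0 y1 y2 by blast
qed

lemma set_img: "{x. \<exists>m n::int. x = of_int m + of_int n * phi \<and> 0 \<le> x \<and> P m n} = gg ` {p. P (fst p) (snd p) \<and> gg p \<ge> 0}"
proof (intro equalityI subsetI)
  fix x assume "x \<in> {x. \<exists>m n::int. x = of_int m + of_int n * phi \<and> 0 \<le> x \<and> P m n}"
  then obtain m n where "x = of_int m + of_int n * phi" "0 \<le> x" "P m n" by blast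
  then show "x \<in> gg ` {p. P (fst p) (snd p) \<and> gg p \<ge> 0}"
    by (intro image_eqI[of _ _ "(m,n)"]) (auto simp: gg_def)
qed (auto simp: gg_def)

lemma E1_card: "card (E1 d) = d^2 + d + 1"
proof -
  define D where "D = {p::int\<times>int. \<bar>fst p\<bar> + \<bar>snd p\<bar> \<le> int d}"
  have s1: "{p\<in>D. gg p \<ge> 0} = {p. \<bar>fst p\<bar> + \<bar>snd p\<bar> \<le> int d \<and> gg p \<ge> 0}" unfolding D_def by blast
  have "E1 d = {x. \<exists>m n::int. x = of_int m + of_int n * phi \<and> 0 \<le> x \<and> \<bar>m\<bar> + \<bar>n\<bar> \<le> int d}"
    unfolding E1_eq div_gam by (rule refl)
  also have "\<dots> = gg ` {p. \<bar>fst p\<bar> + \<bar>snd p\<bar> \<le> int d \<and> gg p \<ge> 0}"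
    by (rule set_img[of "\<lambda>m n. \<bar>m\<bar> + \<bar>n\<bar> \<le> int d"])
  finally have e: "E1 d = gg ` {p\<in>D. gg p \<ge> 0}" unfolding s1 .
  have c1: "card (E1 d) = card {p\<in>D. gg p \<ge> 0}"
    unfolding e by (rule card_image) (rule inj_on_subset[OF gg_inj subset_UNIV])
  have "finite D"
  proof -
    have "D \<subseteq> {-int d..int d} \<times> {-int d..int d}" unfolding D_def by auto
    then show ?thesis by (rule finite_subset) simp
  qed
  then have c2: "2 * card {p\<in>D. gg p \<ge> 0} = card D + 1"
    by (rule half_count) (auto simp: D_def)
  have c3: "card D = 2*d^2 + 2*d + 1" unfolding D_def by (rule diamond_card)
  from c1 c2 c3 show ?thesis by (simp add: power2_eq_square)
qed

lemma E2_card: "card (E2 d1 d2) = 2 * d1 * d2 + d1 + d2 + 1"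
proof -
  define D where "D = {-int d1..int d1} \<times> {-int d2..int d2}"
  have s1: "{p\<in>D. gg p \<ge> 0} = {p. \<bar>fst p\<bar> \<le> int d1 \<and> \<bar>snd p\<bar> \<le> int d2 \<and> gg p \<ge> 0}" unfolding D_def by (auto simp: abs_le_iff)
  have "E2 d1 d2 = {x. \<exists>m n::int. x = of_int m + of_int n * phi \<and> 0 \<le> x \<and> (\<bar>m\<bar> \<le> int d1 \<and> \<bar>n\<bar> \<le> int d2)}"
    unfolding E2_eq div_gam by (rule refl)
  also have "\<dots> = gg ` {p. (\<bar>fst p\<bar> \<le> int d1 \<and> \<bar>snd p\<bar> \<le> int d2) \<and> gg p \<ge> 0}"
    by (rule set_img[of "\<lambda>m n. \<bar>m\<bar> \<le> int d1 \<and> \<bar>n\<bar> \<le> int d2"])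
  finally have e: "E2 d1 d2 = gg ` {p\<in>D. gg p \<ge> 0}" unfolding s1 conj_assoc .
  have c1: "card (E2 d1 d2) = card {p\<in>D. gg p \<ge> 0}"
    unfolding e by (rule card_image) (rule inj_on_subset[OF gg_inj subset_UNIV])
  have c2: "2 * card {p\<in>D. gg p \<ge> 0} = card D + 1"
    by (rule half_count) (auto simp: D_def)
  have c3: "card D = (2*d1+1)*(2*d2+1)" unfolding D_def by (rule box_card)
  have "(2*d1+1)*(2*d2+1) + 1 = 2*(2 * d1 * d2 + d1 + d2 + 1)" by (simp add: algebra_simps)
  then have "2 * card {p\<in>D. gg p \<ge> 0} = 2*(2 * d1 * d2 + d1 + d2 + 1)" using c2 c3 by simp
  then show ?thesis using c1 by simp
qed

theorem mainTheorem14: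
  fixes d d1 d2 :: nat
  shows "E1 d = {x. \<exists>m n :: int. x = of_int m + of_int n / gam \<and> x \<ge> 0 \<and> \<bar>m\<bar> + \<bar>n\<bar> \<le> int d}
       \<and> E2 d1 d2 = {x. \<exists>m n :: int. x = of_int m + of_int n / gam \<and> x \<ge> 0 \<and> \<bar>m\<bar> \<le> int d1 \<and> \<bar>n\<bar> \<le> int d2}
       \<and> card (E1 d) = d^2 + d + 1
       \<and> card (E2 d1 d2) = 2 * d1 * d2 + d1 + d2 + 1"
  by (intro conjI E1_eq E2_eq E1_card E2_card)

end
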